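(* Let $a,b$ be real constants with $|a|,|b|\le 0.01$ and define, for real $x>1$, \[f(x)=\frac{(x+a)(x+1)+2b-2\sqrt{x^3+ax+b}\,\sqrt{1+a+b}}{(1-x)^2}.\] Then $f(x)\le 2$ for all $x>1$. *)

theory Defs
  imports Complex_Main
begin

end

theory Submission
  imports Defs
begin

theorem lemmaA2:
  fixes a b x :: real
  assumes "\<bar>a\<bar> \<le> 0.01" and "\<bar>b\<bar> \<le> 0.01" and "x > 1"
  shows "((x + a) * (x + 1) + 2 * b - 2 * sqrt (x ^ 3 + a * x + b) * sqrt (1 + a + b))
           / (1 - x) ^ 2 \<le> 2"
proof -
  define P where "P = x ^ 3 + a * x + b"
  define Q where "Q = 1 + a + b"
  define N where "N = (5+a)*x - x^2 + (a + 2*b - 2)"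
  have a1: "-(1/100) \<le> a" "a \<le> (1/100)" "-(1/100) \<le> b" "b \<le> (1/100)" using assms(1,2) by (auto simp: abs_le_iff)
  have Q0: "Q > 0" using a1 unfolding Q_def by linarith
  have x3: "x^3 \<ge> x" using assms(3)
    by (metis less_imp_le one_le_numeral order_le_less power_increasing power_one_right)
  have ax: "a * x \<ge> -(1/100) * x" using a1 assms(3) by (intro mult_right_mono) auto
  have P0: "P > 0" using x3 ax a1 assms(3) unfolding P_def by linarith
  have den: "(1 - x)^2 > 0" using assms(3) by simp
  have key: "N \<le> 2 * sqrt P * sqrt Q"
  proof (cases "N \<le> 0")
    case True
    then show ?thesis using P0 Q0 by (smt (verit) real_sqrt_ge_zero mult_nonneg_nonneg)
  next
    case False
    have x5: "x < 5"
    proof (rule ccontr)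
      assume "\<not> x < 5"
      then have "x \<ge> 5" by simp
      have N': "N = (5 + a - x) * x + (a + 2*b - 2)" unfolding N_def
        by (simp add: algebra_simps power2_eq_square)
      show False
      proof (cases "5 + a - x \<le> 0")
        case True
        then have "(5 + a - x) * x \<le> 0" using \<open>x \<ge> 5\<close> by (simp add: mult_nonpos_nonneg)
        then show False using N' False a1 by linarith
      next
        case c2: False
        then have "x \<le> 6" using a1 by linarith
        have "(5 + a - x) * x \<le> (1/100) * x"
          using a1 \<open>x \<ge> 5\<close> by (intro mult_right_mono) auto
        then show False using N' False a1 \<open>x \<le> 6\<close> by linarith
      qed
    qed
    define R where "R = 0 - x^2 + (12 + 6*a + 4*b)*x + 4*(1+a+b)*b - (a+2*b-2)^2"
    have E: "4 * P * Q - N^2 = (x - 1)^2 * R"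
      unfolding P_def Q_def N_def R_def by (simp add: algebra_simps power2_eq_square power3_eq_cube)
    have h1: "12*x - x^2 - 4 \<ge> 7"
    proof -
      have e: "12*x - x^2 - 4 - 7 = (x-1)*(11-x)" by (simp add: algebra_simps power2_eq_square)
      have "(x-1)*(11-x) \<ge> 0" using assms(3) x5 by simp
      then show ?thesis using e by linarith
    qed
    have h2: "(6*a + 4*b)*x \<ge> -1/2"
    proof -
      have "(6*a+4*b)*x \<ge> (-1/10) * x" using a1 assms(3) by (intro mult_right_mono) auto
      then show ?thesis using x5 by linarith
    qed
    have h3: "4*(1+a+b)*b \<ge> -1/10"
    proof -
      obtain t where t: "t = (1+a+b)*b" by simp
      have "t \<ge> (1+a+b) * (-(1/100))" unfolding t using a1 by (intro mult_left_mono) auto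
      then have "t \<ge> -1/40" using a1 by (simp add: field_simps)
      moreover have "4*(1+a+b)*b = 4*t" unfolding t by simp
      ultimately show ?thesis by linarith
    qed
    have h4: "(a+2*b-2)^2 \<le> 5"
    proof -
      have "\<bar>a+2*b-2\<bar> \<le> 203/100" using a1 by linarith
      then have "\<bar>a+2*b-2\<bar>^2 \<le> (203/100)^2" by (intro power_mono) auto
      moreover have "(203/100::real)^2 \<le> 5" by (simp add: power2_eq_square)
      ultimately show ?thesis by simp
    qed
    have "R = (12*x - x^2 - 4) + (6*a + 4*b)*x + 4*(1+a+b)*b - (a+2*b-2)^2 + 4"
      unfolding R_def by (simp add: distrib_right)
    then have "R > 0" using h1 h2 h3 h4 by linarith
    then have "4 * P * Q - N^2 \<ge> 0" using E by simp
    moreover have "(2 * sqrt P * sqrt Q)^2 = 4 * P * Q"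
    proof -
      have "(2 * sqrt P * sqrt Q)^2 = 2^2 * (sqrt P)^2 * (sqrt Q)^2"
        by (simp only: power_mult_distrib)
      also have "\<dots> = 4 * P * Q" using P0 Q0 by (simp only: real_sqrt_pow2 less_imp_le) simp
      finally show ?thesis .
    qed
    ultimately have N2: "N^2 \<le> (2 * sqrt P * sqrt Q)^2" by linarith
    have nn: "0 \<le> 2 * sqrt P * sqrt Q"
      using P0 Q0 by (intro mult_nonneg_nonneg) auto
    show ?thesis by (rule power2_le_imp_le[OF N2 nn])
  qed
  have eqN: "(x + a) * (x + 1) + 2 * b - 2 * (1 - x)^2 = N"
    unfolding N_def by (simp add: algebra_simps power2_eq_square)
  have num: "(x + a) * (x + 1) + 2 * b - 2 * sqrt P * sqrt Q \<le> 2 * (1 - x)^2"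
    using key eqN by linarith
  show ?thesis using num den unfolding P_def Q_def
    by (simp add: pos_divide_le_eq)
qed

end
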